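(* Let $\langle\mathcal X,\mathcal C,d,(x_1,\dots,x_n)\rangle$ be a facility location instance, let $q^\star$ be a population-optimal location, and for each panel $S$ let $\overline q(S)$ be a panel-optimal location. Fix $T>2$ and $\delta\in(0,1)$, and let $k\le n$ be an integer with $$k\ge\frac{2\log(1/\delta)}{\log\big(T^2/(4(T-1))\big)} .$$ Then $\mathbb P_{S\sim\mathcal U_{k,n}}\big[d(q^\star,\overline q(S))\le T\cdot\textsc{Social-Opt}\big]\ge1-\delta$.
   Context: A facility location instance $\langle\mathcal X,\mathcal C,d,(x_1,\dots,x_n)\rangle$ consists of a metric space $(\mathcal X,d)$ with $d:\mathcal X\times\mathcal X\to[0,1]$, a set of candidate locations $\mathcal C\subseteq\mathcal X$, and agent locations $x_1,\dots,x_n\in\mathcal X$. $\textsc{Social-Cost}(q)=\frac1n\sum_{i=1}^n d(q,x_i)$, $\textsc{Social-Opt}=\min_{q\in\mathcal C}\textsc{Social-Cost}(q)$, $q^\star\in\arg\min_{q\in\mathcal C}\textsc{Social-Cost}(q)$; for a panel $S\subseteq[n]$ of size $k$, $\textsc{Panel-Cost}(q,S)=\frac1k\sum_{i\in S}d(q,x_i)$ and $\overline q(S)\in\arg\min_{q\in\mathcal C}\textsc{Panel-Cost}(q,S)$ (minimizers are assumed to exist). $\mathcal U_{k,n}$ is the uniform distribution over subsets of $[n]$ of size $k$. *)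

theory Defs
  imports "HOL-Probability.Probability"
begin

definition unit_metric_on :: "'a set \<Rightarrow> ('a \<Rightarrow> 'a \<Rightarrow> real) \<Rightarrow> bool" where
  "unit_metric_on X d \<longleftrightarrow>
     (\<forall>x\<in>X. \<forall>y\<in>X. 0 \<le> d x y \<and> d x y \<le> 1) \<and>
     (\<forall>x\<in>X. \<forall>y\<in>X. d x y = 0 \<longleftrightarrow> x = y) \<and>
     (\<forall>x\<in>X. \<forall>y\<in>X. d x y = d y x) \<and>
     (\<forall>x\<in>X. \<forall>y\<in>X. \<forall>z\<in>X. d x z \<le> d x y + d y z)"

text \<open>Agents are indexed by {1..n}; xs i is the location of agent i.\<close>
definition social_cost :: "('a \<Rightarrow> 'a \<Rightarrow> real) \<Rightarrow> (nat \<Rightarrow> 'a) \<Rightarrow> nat \<Rightarrow> 'a \<Rightarrow> real" where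
  "social_cost d xs n q = (\<Sum>i\<in>{1..n}. d q (xs i)) / real n"

definition social_opt :: "('a \<Rightarrow> 'a \<Rightarrow> real) \<Rightarrow> 'a set \<Rightarrow> (nat \<Rightarrow> 'a) \<Rightarrow> nat \<Rightarrow> real" where
  "social_opt d C xs n = (INF q\<in>C. social_cost d xs n q)"

definition panel_cost :: "('a \<Rightarrow> 'a \<Rightarrow> real) \<Rightarrow> (nat \<Rightarrow> 'a) \<Rightarrow> nat set \<Rightarrow> 'a \<Rightarrow> real" where
  "panel_cost d xs S q = (\<Sum>i\<in>S. d q (xs i)) / real (card S)"

definition panels :: "nat \<Rightarrow> nat \<Rightarrow> nat set set" where
  "panels k n = {S. S \<subseteq> {1..n} \<and> card S = k}"

definition uniform_panels :: "nat \<Rightarrow> nat \<Rightarrow> nat set pmf" where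
  "uniform_panels k n = pmf_of_set (panels k n)"

end

theory Submission
  imports Defs
begin

definition esum :: "nat \<Rightarrow> 'b set \<Rightarrow> ('b \<Rightarrow> real) \<Rightarrow> real" where
  "esum k I v = (\<Sum>S\<in>{S. S \<subseteq> I \<and> card S = k}. \<Prod>i\<in>S. v i)"

lemma esum_0: "finite I \<Longrightarrow> esum 0 I v = 1"
proof -
  assume "finite I"
  then have "{S. S \<subseteq> I \<and> card S = 0} = {{}}" using finite_subset by fastforce
  then show ?thesis by (simp add: esum_def)
qed

lemma esum_empty: "esum (Suc k) {} v = 0"
  by (simp add: esum_def)

lemma esum_insert:
  assumes fin: "finite I" and i: "i \<notin> I"
  shows "esum (Suc k) (insert i I) v = esum (Suc k) I v + v i * esum k I v"
proof -
  let ?A = "{S. S \<subseteq> I \<and> card S = Suc k}"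
  let ?B = "{S. S \<subseteq> I \<and> card S = k}"
  have eq: "{S. S \<subseteq> insert i I \<and> card S = Suc k} = ?A \<union> insert i ` ?B"
  proof (rule set_eqI, rule iffI)
    fix S assume S: "S \<in> {S. S \<subseteq> insert i I \<and> card S = Suc k}"
    show "S \<in> ?A \<union> insert i ` ?B"
    proof (cases "i \<in> S")
      case True
      have "finite S" using S fin finite_subset by (metis (no_types, lifting) finite_insert mem_Collect_eq)
      then have "S - {i} \<in> ?B" using S True by auto
      moreover have "S = insert i (S - {i})" using True by auto
      ultimately show ?thesis by blast
    next
      case False then show ?thesis using S by auto
    qed
  next
    fix S assume "S \<in> ?A \<union> insert i ` ?B"
    then show "S \<in> {S. S \<subseteq> insert i I \<and> card S = Suc k}"
    proof
      assume "S \<in> ?A" then show ?thesis by auto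
    next
      assume "S \<in> insert i ` ?B"
      then obtain R where R: "R \<in> ?B" "S = insert i R" by blast
      have "finite R" using R fin finite_subset by blast
      moreover have "i \<notin> R" using R i by blast
      ultimately show ?thesis using R by auto
    qed
  qed
  have disj: "?A \<inter> insert i ` ?B = {}" using i by auto
  have inj: "inj_on (insert i) ?B"
  proof (rule inj_onI)
    fix x y assume xy: "x \<in> ?B" "y \<in> ?B" "insert i x = insert i y"
    have "i \<notin> x" "i \<notin> y" using xy i by auto
    then show "x = y" using xy(3) by (metis Diff_insert_absorb)
  qed
  have finA: "finite ?A" using fin by simp
  have finB: "finite ?B" using fin by simp
  have "esum (Suc k) (insert i I) v = (\<Sum>S\<in>?A. \<Prod>j\<in>S. v j) + (\<Sum>S\<in>insert i ` ?B. \<Prod>j\<in>S. v j)"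
    unfolding esum_def eq using finA finB disj by (simp add: sum.union_disjoint)
  also have "(\<Sum>S\<in>insert i ` ?B. \<Prod>j\<in>S. v j) = (\<Sum>R\<in>?B. \<Prod>j\<in>insert i R. v j)"
    using inj by (simp add: sum.reindex)
  also have "\<dots> = (\<Sum>R\<in>?B. v i * (\<Prod>j\<in>R. v j))"
  proof (rule sum.cong)
    fix R assume R: "R \<in> ?B"
    have "finite R" using R fin finite_subset by blast
    moreover have "i \<notin> R" using R i by blast
    ultimately show "(\<Prod>j\<in>insert i R. v j) = v i * (\<Prod>j\<in>R. v j)" by simp
  qed simp
  finally show ?thesis by (simp add: esum_def sum_distrib_left)
qed

lemma tangent_pow:
  fixes a x :: real
  assumes "0 \<le> a" "0 \<le> x"
  shows "a ^ Suc K + real (Suc K) * a ^ K * (x - a) \<le> x ^ Suc K"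
proof (induction K)
  case 0 then show ?case by simp
next
  case (Suc K)
  have "x * (a ^ Suc K + real (Suc K) * a ^ K * (x - a)) \<le> x * x ^ Suc K"
    using Suc assms by (simp add: mult_left_mono)
  moreover have "a ^ Suc (Suc K) + real (Suc (Suc K)) * a ^ Suc K * (x - a)
      = x * (a ^ Suc K + real (Suc K) * a ^ K * (x - a)) - real (Suc K) * a ^ K * (x - a)^2"
    by (simp add: algebra_simps power2_eq_square)
  moreover have "0 \<le> real (Suc K) * a ^ K * (x - a)^2" using assms by simp
  ultimately show ?case by simp
qed

lemma esum_bound:
  assumes "finite I" "\<forall>i\<in>I. 0 \<le> v i"
  shows "esum k I v \<le> real (card I choose k) * (sum v I / card I) ^ k"
  using assms
proof (induction I arbitrary: k rule: finite_induct)
  case empty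
  show ?case
  proof (cases k)
    case 0 then show ?thesis using esum_0[of "{}" v] by simp
  qed (simp add: esum_def)
next
  case (insert i I)
  show ?case
  proof (cases k)
    case 0 then show ?thesis using insert by (simp add: esum_0)
  next
    case (Suc K)
    define m where "m = card I"
    define s where "s = sum v I"
    define a where "a = s / m"
    have vi: "0 \<le> v i" using insert by simp
    have s0: "0 \<le> s" unfolding s_def using insert by (simp add: sum_nonneg)
    have a0: "0 \<le> a" unfolding a_def using s0 by simp
    have sma: "s = m * a"
    proof (cases "m = 0")
      case True then have "I = {}" using insert m_def by simp
      then show ?thesis using s_def True by simp
    qed (simp add: a_def)
    have IH1: "esum (Suc K) I v \<le> real (m choose Suc K) * a ^ Suc K"
      unfolding m_def s_def a_def by (rule insert.IH) (use insert.prems in auto)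
    have IH2: "esum K I v \<le> real (m choose K) * a ^ K"
      unfolding m_def s_def a_def by (rule insert.IH) (use insert.prems in auto)
    define b where "b = (s + v i) / (m + 1)"
    have b0: "0 \<le> b" unfolding b_def using s0 vi by simp
    have ba: "b - a = (v i - a) / (m + 1)" unfolding b_def sma by (simp add: field_simps)
    have tan: "a ^ Suc K + real (Suc K) * a ^ K * (b - a) \<le> b ^ Suc K"
      by (rule tangent_pow[OF a0 b0])
    have c1: "real (Suc m choose Suc K) * real (Suc K) = (m + 1) * real (m choose K)"
    proof -
      have "real (Suc m) * real (m choose K) = real (Suc m choose Suc K) * real (Suc K)"
        using arg_cong[OF Suc_times_binomial_eq[of m K], of real] by (simp only: of_nat_mult)
      then show ?thesis by simp
    qed
    have c2: "real (Suc m choose Suc K) = real (m choose K) + real (m choose Suc K)" by simp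
    have "esum k (insert i I) v = esum (Suc K) I v + v i * esum K I v"
      unfolding Suc by (rule esum_insert[OF insert(1,2)])
    also have "\<dots> \<le> real (m choose Suc K) * a ^ Suc K + v i * (real (m choose K) * a ^ K)"
      by (rule add_mono[OF IH1 mult_left_mono[OF IH2 vi]])
    also have "\<dots> = real (Suc m choose Suc K) * (a ^ Suc K + real (Suc K) * a ^ K * (b - a))"
    proof -
      have "real (Suc m choose Suc K) * (real (Suc K) * a ^ K * (b - a))
           = (real (Suc m choose Suc K) * real (Suc K)) * a ^ K * (b - a)" by simp
      also have "\<dots> = real (m choose K) * a ^ K * (v i - a)" unfolding c1 ba by simp
      finally show ?thesis unfolding c2 by (simp add: algebra_simps)
    qed
    also have "\<dots> \<le> real (Suc m choose Suc K) * b ^ Suc K"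
      using tan by (simp add: mult_left_mono)
    also have "real (Suc m choose Suc K) * b ^ Suc K
       = real (card (insert i I) choose k) * (sum v (insert i I) / card (insert i I)) ^ k"
    proof -
      have "card (insert i I) = Suc m" using insert m_def by simp
      moreover have "sum v (insert i I) = s + v i" using insert s_def by simp
      ultimately show ?thesis unfolding b_def Suc by simp
    qed
    finally show ?thesis .
  qed
qed
lemma powr_le_lin:
  fixes c z :: real
  assumes "0 < c" "0 \<le> z" "z \<le> 1"
  shows "c powr z \<le> 1 + (c - 1) * z"
proof -
  have "exp ((1 - z) *\<^sub>R 0 + z *\<^sub>R ln c) \<le> (1 - z) * exp 0 + z * exp (ln c)"
    by (rule convex_onD[OF exp_convex]) (use assms in auto)
  then show ?thesis using assms by (simp add: powr_def algebra_simps)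
qed

lemma final_bound:
  fixes T \<delta> :: real and k :: nat
  assumes T: "T > 2" and delta: "0 < \<delta>" "\<delta> < 1"
    and k_ge: "real k \<ge> 2 * ln (1 / \<delta>) / ln (T^2 / (4 * (T - 1)))"
  shows "(2 * (T - 1) / T) ^ k / (T - 1) powr (real k / 2) \<le> \<delta>"
proof -
  define L where "L = ln (T^2 / (4 * (T - 1)))"
  have gt1: "T^2 / (4 * (T - 1)) > 1"
  proof -
    have "(T - 2)^2 > 0" using T by simp
    then have "T^2 > 4 * (T - 1)" by (simp add: power2_eq_square algebra_simps)
    then show ?thesis using T by simp
  qed
  have L0: "L > 0" unfolding L_def using gt1 by simp
  have LL: "L = 2 * ln T - 2 * ln 2 - ln (T - 1)"
  proof -
    have "ln (T^2 / (4 * (T - 1))) = ln (T^2) - ln (4 * (T - 1))" using T by (simp add: ln_div)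
    also have "ln (T^2) = 2 * ln T" by (simp add: ln_realpow)
    also have "ln (4 * (T - 1)) = ln 4 + ln (T - 1)" using T ln_mult[of 4 "T - 1"] by simp
    also have "ln (4::real) = 2 * ln 2"
      using ln_realpow[of "2::real" 2] by simp
    finally show ?thesis unfolding L_def by simp
  qed
  define B where "B = (2 * (T - 1) / T) ^ k / (T - 1) powr (real k / 2)"
  have B0: "B > 0" unfolding B_def using T by simp
  have lnB: "ln B = - (real k / 2) * L"
  proof -
    have "ln B = ln ((2 * (T - 1) / T) ^ k) - ln ((T - 1) powr (real k / 2))"
      unfolding B_def using T by (simp add: ln_div)
    also have "ln ((2 * (T - 1) / T) ^ k) = real k * ln (2 * (T - 1) / T)" by (simp add: ln_realpow)
    also have "ln (2 * (T - 1) / T) = ln 2 + ln (T - 1) - ln T" using T ln_mult[of 2 "T - 1"] ln_div[of "2 * (T - 1)" T] by simp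
    finally show ?thesis unfolding LL by (simp add: algebra_simps)
  qed
  have "2 * ln (1 / \<delta>) \<le> real k * L" using k_ge L0 unfolding L_def[symmetric]
    by (simp add: divide_le_eq)
  then have "ln B \<le> ln \<delta>" unfolding lnB using delta by (simp add: ln_div)
  then show ?thesis using B0 delta unfolding B_def[symmetric] by simp
qed

theorem theorem4p2:
  fixes X C :: "'a set" and d :: "'a \<Rightarrow> 'a \<Rightarrow> real"
    and xs :: "nat \<Rightarrow> 'a" and n k :: nat
    and qstar :: 'a and qbar :: "nat set \<Rightarrow> 'a"
    and T \<delta> :: real
  assumes metric: "unit_metric_on X d"
    and C_sub: "C \<subseteq> X"
    and agents: "\<forall>i\<in>{1..n}. xs i \<in> X"
    and qstar_in: "qstar \<in> C"
    and qstar_opt: "\<forall>q\<in>C. social_cost d xs n qstar \<le> social_cost d xs n q"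
    and qbar_in: "\<forall>S\<in>panels k n. qbar S \<in> C"
    and qbar_opt: "\<forall>S\<in>panels k n. \<forall>q\<in>C. panel_cost d xs S (qbar S) \<le> panel_cost d xs S q"
    and T: "T > 2"
    and delta: "0 < \<delta>" "\<delta> < 1"
    and k_le: "k \<le> n"
    and k_ge: "real k \<ge> 2 * ln (1 / \<delta>) / ln (T^2 / (4 * (T - 1)))"
  shows "measure_pmf.prob (uniform_panels k n)
           {S. d qstar (qbar S) \<le> T * social_opt d C xs n} \<ge> 1 - \<delta>"
proof -
  define I where "I = {1..n}"
  define P where "P = panels k n"
  define dd where "dd i = d qstar (xs i)" for i
  define OPT where "OPT = social_opt d C xs n"
  define G where "G = {S. d qstar (qbar S) \<le> T * OPT}"
  have finI: "finite I" unfolding I_def by simp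
  have P_eq: "P = {S. S \<subseteq> I \<and> card S = k}" unfolding P_def panels_def I_def by simp
  have finP: "finite P" unfolding P_eq using finI by simp
  have cardP: "card P = n choose k" unfolding P_eq using n_subsets[OF finI] I_def by simp
  have neP: "P \<noteq> {}" 
  proof -
    have "card P > 0" using cardP k_le by simp
    then show ?thesis by auto
  qed
  have qX: "qstar \<in> X" using qstar_in C_sub by auto
  have mR: "\<forall>x\<in>X. \<forall>y\<in>X. 0 \<le> d x y \<and> d x y \<le> 1"
    using metric unfolding unit_metric_on_def by (elim conjE)
  have mS: "\<forall>x\<in>X. \<forall>y\<in>X. d x y = d y x"
    using metric unfolding unit_metric_on_def by (elim conjE)
  have mT: "\<forall>x\<in>X. \<forall>y\<in>X. \<forall>z\<in>X. d x z \<le> d x y + d y z"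
    using metric unfolding unit_metric_on_def by (elim conjE)
  have dd01: "0 \<le> dd i \<and> dd i \<le> 1" if "i \<in> I" for i
  proof -
    have "xs i \<in> X" using agents that unfolding I_def by blast
    then show ?thesis using mR qX unfolding dd_def by blast
  qed
  have kpos: "k > 0"
  proof -
    have gt1: "T^2 / (4 * (T - 1)) > 1"
    proof -
      have "(T - 2)^2 > 0" using T by simp
      then have "T^2 > 4 * (T - 1)" by (simp add: power2_eq_square algebra_simps)
      then show ?thesis using T by simp
    qed
    have "ln (1 / \<delta>) > 0" using delta by simp
    moreover have "ln (T^2 / (4 * (T - 1))) > 0" using gt1 by simp
    ultimately have "2 * ln (1 / \<delta>) / ln (T^2 / (4 * (T - 1))) > 0" by simp
    then show ?thesis using k_ge by linarith
  qed
  have npos: "n > 0" using kpos k_le by simp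
  have OPT_eq: "OPT = (\<Sum>i\<in>I. dd i) / n"
  proof -
    have "OPT = Inf ((\<lambda>q. social_cost d xs n q) ` C)" unfolding OPT_def social_opt_def by simp
    also have "\<dots> = social_cost d xs n qstar"
      by (rule cInf_eq_minimum) (use qstar_in qstar_opt in auto)
    finally show ?thesis unfolding social_cost_def dd_def I_def by simp
  qed
  have OPT0: "OPT \<ge> 0" unfolding OPT_eq using dd01 by (simp add: sum_nonneg)
  have sumdd: "(\<Sum>i\<in>I. dd i) = n * OPT" unfolding OPT_eq using npos by simp
  have panel: "(\<Sum>i\<in>S. d (qbar S) (xs i) - dd i) \<le> 0" if S: "S \<in> P" for S
  proof -
    have "panel_cost d xs S (qbar S) \<le> panel_cost d xs S qstar"
      using qbar_opt qstar_in S unfolding P_def by blast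
    moreover have "card S = k" using S P_eq by simp
    ultimately have "(\<Sum>i\<in>S. d (qbar S) (xs i)) \<le> (\<Sum>i\<in>S. dd i)"
      using kpos unfolding panel_cost_def dd_def by (simp add: divide_right_mono_neg divide_le_cancel)
    then show ?thesis by (simp add: sum_subtractf)
  qed
  have tri: "d (qbar S) (xs i) - dd i \<ge> d qstar (qbar S) - 2 * dd i \<and>
             d (qbar S) (xs i) - dd i \<ge> - d qstar (qbar S)" if S: "S \<in> P" and i: "i \<in> S" for S i
  proof -
    have qb: "qbar S \<in> X" using qbar_in S C_sub unfolding P_def by blast
    have xi: "xs i \<in> X" using agents S i unfolding P_eq I_def by blast
    have "d qstar (qbar S) \<le> d qstar (xs i) + d (xs i) (qbar S)" using mT qb xi qX by simp
    moreover have "d (xs i) (qbar S) = d (qbar S) (xs i)" using mS qb xi by simp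
    moreover have "d qstar (xs i) \<le> d qstar (qbar S) + d (qbar S) (xs i)" using mT qb xi qX by simp
    ultimately show ?thesis unfolding dd_def by linarith
  qed
  have cardS: "card S = k" if "S \<in> P" for S using that P_eq by simp
  have finS: "finite S" if "S \<in> P" for S using that P_eq finI finite_subset by blast
  have bad: "real (card (P - G)) \<le> \<delta> * card P"
  proof (cases "OPT = 0")
    case True
    have "P - G = {}"
    proof (rule ccontr)
      assume "P - G \<noteq> {}"
      then obtain S where S: "S \<in> P" "S \<notin> G" by blast
      define D where "D = d qstar (qbar S)"
      have D: "D > 0" using S True unfolding G_def D_def by simp
      have "(\<Sum>i\<in>S. D - 2 * dd i) \<le> (\<Sum>i\<in>S. d (qbar S) (xs i) - dd i)"
        by (rule sum_mono) (use tri[OF S(1)] D_def in auto)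
      also have "\<dots> \<le> 0" by (rule panel[OF S(1)])
      finally have "k * D - 2 * (\<Sum>i\<in>S. dd i) \<le> 0"
        using cardS[OF S(1)] by (simp add: sum_subtractf sum_distrib_left)
      moreover have "(\<Sum>i\<in>S. dd i) \<le> (\<Sum>i\<in>I. dd i)"
        by (rule sum_mono2[OF finI]) (use S P_eq dd01 in auto)
      moreover have "k * D > 0" using kpos D by simp
      ultimately show False using sumdd True by simp
    qed
    then have "card (P - G) = 0" by (simp only: card.empty)
    then show ?thesis using delta by simp
  next
    case False
    then have OPTp: "OPT > 0" using OPT0 by simp
    define D0 where "D0 = T * OPT"
    have D0: "D0 > 0" unfolding D0_def using OPTp T by simp
    define z where "z i = min (dd i) D0 / D0" for i
    have z01: "0 \<le> z i \<and> z i \<le> 1" if "i \<in> I" for i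
      using dd01[OF that] D0 unfolding z_def by auto
    have sumz: "(\<Sum>i\<in>I. z i) \<le> n / T"
    proof -
      have "(\<Sum>i\<in>I. z i) \<le> (\<Sum>i\<in>I. dd i / D0)"
        by (rule sum_mono) (use D0 in \<open>auto simp: z_def divide_right_mono\<close>)
      also have "\<dots> = n * OPT / D0" unfolding sum_divide_distrib[symmetric] sumdd ..
      also have "\<dots> = n / T" unfolding D0_def using OPTp T by simp
      finally show ?thesis .
    qed
    have zbad: "real k / 2 \<le> (\<Sum>i\<in>S. z i)" if S: "S \<in> P - G" for S
    proof -
      define D where "D = d qstar (qbar S)"
      have SP: "S \<in> P" using S by blast
      have DD0: "D > D0" using S unfolding G_def D_def D0_def by auto
      have each: "D0 - 2 * min (dd i) D0 \<le> (D0 / D) * (d (qbar S) (xs i) - dd i)" if i: "i \<in> S" for i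
      proof -
        have t: "d (qbar S) (xs i) - dd i \<ge> D - 2 * dd i" "d (qbar S) (xs i) - dd i \<ge> - D"
          using tri[OF SP i] D_def by auto
        have ddi: "0 \<le> dd i" using dd01 i SP P_eq by blast
        have r: "0 < D0 / D" "D0 / D \<le> 1" using D0 DD0 by auto
        show ?thesis
        proof (cases "dd i \<ge> D0")
          case True
          have "(D0 / D) * (- D) \<le> (D0 / D) * (d (qbar S) (xs i) - dd i)"
            using mult_left_mono[OF t(2) less_imp_le[OF r(1)]] .
          moreover have "(D0 / D) * (- D) = - D0" using DD0 D0 by simp
          ultimately show ?thesis using True by simp
        next
          case False
          have "(D0 / D) * (D - 2 * dd i) \<le> (D0 / D) * (d (qbar S) (xs i) - dd i)"
            using mult_left_mono[OF t(1) less_imp_le[OF r(1)]] .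
          moreover have "(D0 / D) * (D - 2 * dd i) = D0 - 2 * dd i * (D0 / D)" using DD0 D0 by (simp add: field_simps)
          moreover have "dd i * (D0 / D) \<le> dd i" using mult_left_mono[OF r(2) ddi] by simp
          ultimately show ?thesis using False by simp
        qed
      qed
      have "(\<Sum>i\<in>S. D0 - 2 * min (dd i) D0) \<le> (\<Sum>i\<in>S. (D0 / D) * (d (qbar S) (xs i) - dd i))"
        by (rule sum_mono) (rule each)
      also have "\<dots> = (D0 / D) * (\<Sum>i\<in>S. d (qbar S) (xs i) - dd i)" by (simp add: sum_distrib_left)
      also have "\<dots> \<le> 0" using mult_nonneg_nonpos[OF _ panel[OF SP], of "D0 / D"] D0 DD0 by simp
      finally have "k * D0 - 2 * (\<Sum>i\<in>S. min (dd i) D0) \<le> 0"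
        using cardS[OF SP] by (simp add: sum_subtractf sum_distrib_left)
      then have "k * D0 / 2 \<le> (\<Sum>i\<in>S. min (dd i) D0)" by simp
      then have "k * D0 / 2 / D0 \<le> (\<Sum>i\<in>S. min (dd i) D0) / D0" using D0 by (intro divide_right_mono) auto
      moreover have "k * D0 / 2 / D0 = k / 2" using D0 by simp
      ultimately show ?thesis unfolding z_def sum_divide_distrib[symmetric] by linarith
    qed
    define c where "c = T - 1"
    have c1: "c > 1" unfolding c_def using T by simp
    define v where "v i = 1 + (c - 1) * z i" for i
    have v0: "\<forall>i\<in>I. 0 \<le> v i" unfolding v_def using z01 c1 by (simp add: add_nonneg_nonneg)
    define f where "f S = (\<Prod>i\<in>S. v i) / c powr (real k / 2)" for S
    have f0: "f S \<ge> 0" if "S \<in> P" for S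
      unfolding f_def using v0 that P_eq by (auto intro!: prod_nonneg divide_nonneg_nonneg)
    have f1: "f S \<ge> 1" if S: "S \<in> P - G" for S
    proof -
      have SP: "S \<in> P" using S by blast
      have "c powr (real k / 2) \<le> c powr (\<Sum>i\<in>S. z i)"
        using zbad[OF S] c1 by simp
      also have "\<dots> = (\<Prod>i\<in>S. c powr z i)" using c1 by (simp add: powr_sum)
      also have "\<dots> \<le> (\<Prod>i\<in>S. v i)"
        by (rule prod_mono) (use z01 SP P_eq c1 in \<open>auto simp: v_def intro!: powr_le_lin\<close>)
      finally show ?thesis unfolding f_def using c1 by simp
    qed
    have "real (card (P - G)) = (\<Sum>S\<in>P - G. 1)" by simp
    also have "\<dots> \<le> (\<Sum>S\<in>P - G. f S)" by (rule sum_mono) (rule f1)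
    also have "\<dots> \<le> (\<Sum>S\<in>P. f S)" by (rule sum_mono2[OF finP]) (use f0 in auto)
    also have "\<dots> = esum k I v / c powr (real k / 2)"
      unfolding f_def esum_def P_eq by (simp add: sum_divide_distrib)
    also have "\<dots> \<le> real (card I choose k) * (sum v I / card I) ^ k / c powr (real k / 2)"
      by (rule divide_right_mono[OF esum_bound[OF finI v0]]) simp
    also have "\<dots> \<le> real (n choose k) * (2 * (T - 1) / T) ^ k / (T - 1) powr (real k / 2)"
    proof -
      have cI: "card I = n" unfolding I_def by simp
      have "sum v I = n + (c - 1) * (\<Sum>i\<in>I. z i)" unfolding v_def cI[symmetric]
        by (simp add: sum.distrib sum_distrib_left)
      also have "\<dots> \<le> n + (c - 1) * (n / T)" using mult_left_mono[OF sumz, of "c - 1"] c1 by simp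
      also have "\<dots> = n * (2 * (T - 1) / T)" unfolding c_def using T by (simp add: field_simps)
      finally have "sum v I / card I \<le> 2 * (T - 1) / T" using npos cI by (simp add: divide_le_eq mult.commute)
      moreover have "0 \<le> sum v I / card I" using v0 by (simp add: sum_nonneg)
      ultimately have "(sum v I / card I) ^ k \<le> (2 * (T - 1) / T) ^ k" by (simp add: power_mono)
      then show ?thesis unfolding cI c_def
        by (intro divide_right_mono mult_left_mono) auto
    qed
    also have "\<dots> \<le> real (n choose k) * \<delta>"
      using mult_left_mono[OF final_bound[OF T delta k_ge], of "real (n choose k)"] by simp
    finally show ?thesis using cardP by (simp add: mult.commute)
  qed
  have "card P = card (P \<inter> G) + card (P - G)"
  proof -
    have "card P = card ((P \<inter> G) \<union> (P - G))" by (simp add: Int_Diff_Un)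
    also have "\<dots> = card (P \<inter> G) + card (P - G)" by (rule card_Un_disjoint) (use finP in auto)
    finally show ?thesis .
  qed
  then have "real (card (P \<inter> G)) \<ge> (1 - \<delta>) * card P" using bad by (simp add: algebra_simps)
  moreover have "measure_pmf.prob (uniform_panels k n) G = card (P \<inter> G) / card P"
    unfolding uniform_panels_def P_def[symmetric] by (rule measure_pmf_of_set[OF neP finP])
  moreover have "card P > 0" using neP finP by (simp add: card_gt_0_iff)
  ultimately have "measure_pmf.prob (uniform_panels k n) G \<ge> 1 - \<delta>"
    by (simp add: le_divide_eq)
  then show ?thesis unfolding G_def OPT_def .
qed

end
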